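(* Let $0<p,q,r\le\infty$ with $\frac1p+\frac1q=\frac1r$, let $\alpha=(\alpha_1,\dots,\alpha_N)$ be an $N$-tuple of pairwise distinct vectors in $\mathbb{R}^n$, and let $\rho>0$. For vector-valued functions $f=(f_1,\dots,f_N)$, $g=(g_1,\dots,g_N)$ on $\mathbb{R}^n$ define $$S_{\alpha,\rho}(f,g)(x)=\big(f_1(x+\rho\alpha_1)g_1(x-\alpha_1),\ \dots,\ f_N(x+\rho\alpha_N)g_N(x-\alpha_N)\big).$$ Then the norm of $S_{\alpha,\rho}$ as a bilinear operator from $L^p(\ell^2)\times L^q(\ell^2)$ to $L^r(\ell^2)$ satisfies $$\|S_{\alpha,\rho}\|_{L^p(\ell^2)\times L^q(\ell^2)\to L^r(\ell^2)}\ \ge\ \max\{N^{1/p-1/2},\,N^{1/q-1/2}\}.$$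
   Context: For $h=(h_1,\dots,h_N)$, $\|h\|_{L^s(\ell^2)}=\big\|\big(\sum_{k=1}^N|h_k|^2\big)^{1/2}\big\|_{L^s(\mathbb{R}^n)}$. The operator norm is the supremum of $\|S_{\alpha,\rho}(f,g)\|_{L^r(\ell^2)}$ over $f,g$ with $\|f\|_{L^p(\ell^2)}=\|g\|_{L^q(\ell^2)}=1$ (possibly $+\infty$). *)

theory Defs
  imports "HOL-Analysis.Analysis" "HOL-Probability.Essential_Supremum"
begin

definition inv_exp :: "ereal \<Rightarrow> real" where
  "inv_exp s = (if s = \<infinity> then 0 else 1 / real_of_ereal s)"

definition ell2_fun :: "nat \<Rightarrow> (nat \<Rightarrow> real^'n \<Rightarrow> complex) \<Rightarrow> real^'n \<Rightarrow> real" where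
  "ell2_fun N h x = sqrt (\<Sum>k<N. (cmod (h k x))^2)"

definition Ls_norm :: "ereal \<Rightarrow> (real^'n \<Rightarrow> real) \<Rightarrow> ereal" where
  "Ls_norm s F =
     (if s = \<infinity> then esssup lebesgue (\<lambda>x. ereal (F x))
      else (let I = (\<integral>\<^sup>+ x. ennreal (F x powr real_of_ereal s) \<partial>lebesgue)
            in if I = \<infinity> then \<infinity> else ereal (enn2real I powr (1 / real_of_ereal s))))"

definition Lp_ell2_norm :: "ereal \<Rightarrow> nat \<Rightarrow> (nat \<Rightarrow> real^'n \<Rightarrow> complex) \<Rightarrow> ereal" where
  "Lp_ell2_norm s N h = Ls_norm s (ell2_fun N h)"

definition S_op :: "(nat \<Rightarrow> real^'n) \<Rightarrow> real \<Rightarrow> (nat \<Rightarrow> real^'n \<Rightarrow> complex)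
     \<Rightarrow> (nat \<Rightarrow> real^'n \<Rightarrow> complex) \<Rightarrow> nat \<Rightarrow> real^'n \<Rightarrow> complex" where
  "S_op \<alpha> \<rho> f g k x = f k (x + \<rho> *\<^sub>R \<alpha> k) * g k (x - \<alpha> k)"

definition S_opnorm :: "ereal \<Rightarrow> ereal \<Rightarrow> ereal \<Rightarrow> nat \<Rightarrow> (nat \<Rightarrow> real^'n) \<Rightarrow> real \<Rightarrow> ereal" where
  "S_opnorm p q r N \<alpha> \<rho> = Sup {Lp_ell2_norm r N (S_op \<alpha> \<rho> f g) | f g.
      (\<forall>k<N. f k \<in> borel_measurable lebesgue \<and> g k \<in> borel_measurable lebesgue) \<and>
      Lp_ell2_norm p N f = 1 \<and> Lp_ell2_norm q N g = 1}"

end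

theory Submission
  imports Defs
begin


lemma Ls_norm_ind:
  fixes U :: "(real^'n) set"
  assumes U: "U \<in> sets lebesgue" "emeasure lebesgue U < \<infinity>" "emeasure lebesgue U > 0"
    and c: "c > 0" and s: "s > 0"
  shows "Ls_norm s (\<lambda>x. c * indicator U x) = ereal (c * measure lebesgue U powr inv_exp s)"
proof -
  have fin0: "emeasure lebesgue U = ennreal (measure lebesgue U)"
    using U(2) by (simp add: emeasure_eq_ennreal_measure)
  have mpos: "measure lebesgue U > 0" using U(3) fin0
    by (metis ennreal_less_zero_iff measure_nonneg order_le_less)
  show ?thesis
proof (cases "s = \<infinity>")
  case True
  have meas: "(\<lambda>x. ereal (c * indicator U x)) \<in> borel_measurable lebesgue"
    using U(1) by measurable
  have le: "esssup lebesgue (\<lambda>x. ereal (c * indicator U x)) \<le> c"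
    by (rule esssup_I[OF meas]) (auto simp: indicator_def c less_imp_le)
  have ge: "esssup lebesgue (\<lambda>x. ereal (c * indicator U x)) \<ge> c"
  proof (rule ccontr)
    assume "\<not> ?thesis"
    hence lt: "esssup lebesgue (\<lambda>x. ereal (c * indicator U x)) < c" by simp
    have "AE x in lebesgue. ereal (c * indicator U x) \<le> esssup lebesgue (\<lambda>x. ereal (c * indicator U x))"
      by (rule esssup_AE)
    hence "AE x in lebesgue. x \<notin> U"
      by eventually_elim (use lt in \<open>auto simp: indicator_def\<close>)
    hence "emeasure lebesgue U = 0"
      using U(1) by (simp add: AE_iff_measurable[OF U(1)] emeasure_eq_0_AE)
    thus False using U(3) by simp
  qed
  show ?thesis using le ge True mpos by (simp add: Ls_norm_def inv_exp_def)
next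
  case False
  then obtain t where st: "s = ereal t" and t: "t > 0" using s
    by (cases s) auto
  have eq: "(\<lambda>x. ennreal ((c * indicator U x) powr t)) = (\<lambda>x. ennreal (c powr t) * indicator U x)"
    by (auto simp: indicator_def fun_eq_iff)
  have fin: "emeasure lebesgue U = ennreal (measure lebesgue U)"
    using U(2) by (simp add: emeasure_eq_ennreal_measure)
  have I: "(\<integral>\<^sup>+ x. ennreal ((c * indicator U x) powr t) \<partial>lebesgue) = ennreal (c powr t * measure lebesgue U)"
    unfolding eq using U(1) by (simp add: nn_integral_cmult_indicator fin ennreal_mult)
  have "(c powr t * measure lebesgue U) powr (1/t) = c * measure lebesgue U powr (1/t)"
    using c t by (simp add: powr_mult powr_powr)
  thus ?thesis using st t by (simp add: Ls_norm_def inv_exp_def I Let_def)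
qed
qed


lemma ball_meas_eq: "measure lebesgue (ball (z::real^'n) e) = measure lebesgue (ball (0::real^'n) e)"
proof -
  have "ball z e = (+) z ` ball 0 e" by simp
  thus ?thesis by (metis measure_translation)
qed

lemma ball_emeas: "emeasure lebesgue (ball (z::real^'n) e) = ennreal (measure lebesgue (ball z e))"
  by (simp add: emeasure_eq_measure2)

lemma ell2_disj:
  fixes z :: "nat \<Rightarrow> real^'n" and h :: "nat \<Rightarrow> real^'n \<Rightarrow> complex"
  assumes e: "e > 0" and A: "A > 0" and N: "N \<ge> 1" and s: "s > 0"
    and sep: "\<And>i j. i < N \<Longrightarrow> j < N \<Longrightarrow> i \<noteq> j \<Longrightarrow> 2 * e \<le> dist (z i) (z j)"
    and h: "\<And>k x. k < N \<Longrightarrow> cmod (h k x) = A * indicator (ball (z k) e) x"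
  shows "Lp_ell2_norm s N h = ereal (A * (real N * measure lebesgue (ball (0::real^'n) e)) powr inv_exp s)"
proof -
  define U where "U = (\<Union>k\<in>{..<N}. ball (z k) e)"
  have disj: "disjoint_family_on (\<lambda>k. ball (z k) e) {..<N}"
  proof (unfold disjoint_family_on_def, intro ballI impI)
    fix i j assume "i \<in> {..<N}" "j \<in> {..<N}" "i \<noteq> j"
    hence d: "2 * e \<le> dist (z i) (z j)" using sep by auto
    show "ball (z i) e \<inter> ball (z j) e = {}"
    proof (rule ccontr)
      assume "ball (z i) e \<inter> ball (z j) e \<noteq> {}"
      then obtain y where "dist (z i) y < e" "dist (z j) y < e" by auto
      hence "dist (z i) (z j) < 2 * e" by (metis dist_commute dist_triangle_less_add mult_2)
      thus False using d by simp
    qed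
  qed
  have ell: "ell2_fun N h = (\<lambda>x. A * indicator U x)"
  proof
    fix x
    have "(\<Sum>k<N. (cmod (h k x))^2) = (\<Sum>k<N. A^2 * indicator (ball (z k) e) x)"
      by (rule sum.cong) (auto simp: h indicator_def)
    also have "\<dots> = A^2 * indicator U x"
      unfolding U_def by (simp add: sum_distrib_left[symmetric] indicator_UN_disjoint[OF _ disj])
    finally show "ell2_fun N h x = A * indicator U x"
      using A by (simp add: ell2_fun_def indicator_def real_sqrt_mult)
  qed
  have Usets: "U \<in> sets lebesgue" unfolding U_def by auto
  have mU: "measure lebesgue U = real N * measure lebesgue (ball (0::real^'n) e)"
    unfolding U_def
  proof (subst measure_finite_Union)
    show "(\<Sum>k\<in>{..<N}. measure lebesgue (ball (z k) e)) = real N * measure lebesgue (ball (0::real^'n) e)"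
      by (subst sum.cong[OF refl ball_meas_eq]) simp
  qed (auto simp: disj ball_emeas)
  have "emeasure lebesgue U \<le> (\<Sum>k<N. emeasure lebesgue (ball (z k) e))"
    unfolding U_def by (rule emeasure_subadditive_finite) auto
  also have "\<dots> < \<infinity>" by (simp add: ball_emeas)
  finally have fin: "emeasure lebesgue U < \<infinity>" .
  have "emeasure lebesgue (ball (z 0) e) \<le> emeasure lebesgue U"
    using N unfolding U_def by (intro emeasure_mono UN_upper) auto
  moreover have "emeasure lebesgue (ball (z 0) e) > 0" using e by (simp add: ball_emeas)
  ultimately have pos: "emeasure lebesgue U > 0" by order
  show ?thesis
    unfolding Lp_ell2_norm_def ell using Ls_norm_ind[OF Usets fin pos A s] mU by simp
qed

lemma ell2_same:
  fixes z :: "real^'n" and h :: "nat \<Rightarrow> real^'n \<Rightarrow> complex"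
  assumes e: "e > 0" and A: "A > 0" and N: "N \<ge> 1" and s: "s > 0"
    and h: "\<And>k x. k < N \<Longrightarrow> cmod (h k x) = A * indicator (ball z e) x"
  shows "Lp_ell2_norm s N h = ereal (A * sqrt (real N) * measure lebesgue (ball (0::real^'n) e) powr inv_exp s)"
proof -
  have ell: "ell2_fun N h = (\<lambda>x. (A * sqrt (real N)) * indicator (ball z e) x)"
  proof
    fix x
    have "(\<Sum>k<N. (cmod (h k x))^2) = (\<Sum>k<N. A^2 * indicator (ball z e) x)"
      by (rule sum.cong) (auto simp: h indicator_def)
    thus "ell2_fun N h x = (A * sqrt (real N)) * indicator (ball z e) x"
      using A by (simp add: ell2_fun_def indicator_def real_sqrt_mult)
  qed
  have pos: "emeasure lebesgue (ball z e) > 0" using e by (simp add: ball_emeas)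
  have fin: "emeasure lebesgue (ball z e) < \<infinity>" by (simp add: ball_emeas)
  have "A * sqrt (real N) > 0" using A N by simp
  from Ls_norm_ind[OF _ fin pos this s] show ?thesis
    unfolding Lp_ell2_norm_def ell by (simp add: ball_meas_eq[of z e])
qed



lemma alg:
  fixes N V x y :: real
  assumes "N > 0" "V > 0"
  shows "(1/(sqrt N * V powr x)) * (1/((N*V) powr y)) * (N*V) powr (x+y) = N powr (x - 1/2)"
proof -
  have "sqrt N = N powr (1/2)" using assms by (simp add: powr_half_sqrt)
  moreover have "N powr x = N powr (1/2) * N powr (x - 1/2)"
    by (simp add: powr_add[symmetric])
  ultimately show ?thesis using assms
    by (simp add: powr_add powr_mult field_simps)
qed

lemma alg2:
  fixes N V x y :: real
  assumes "N > 0" "V > 0"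
  shows "(1/((N*V) powr x)) * (1/(sqrt N * V powr y)) * (N*V) powr (x+y) = N powr (y - 1/2)"
  using alg[OF assms, of y x] by (simp add: ac_simps)



lemma ind_shift1:
  fixes a x :: "real^'n"
  shows "indicator (ball 0 e) (x + r *\<^sub>R a) = (indicator (ball (- (r *\<^sub>R a)) e) x :: real)"
proof -
  have eq: "0 - (x + r *\<^sub>R a) = - (r *\<^sub>R a) - x"
    by (simp add: algebra_simps)
  show ?thesis by (simp only: indicator_def mem_ball dist_norm eq)
qed

lemma ind_shift2:
  fixes a x :: "real^'n"
  shows "indicator (ball (- ((1 + r) *\<^sub>R a)) e) (x - a) = (indicator (ball (- (r *\<^sub>R a)) e) x :: real)"
proof -
  have eq: "- ((1 + r) *\<^sub>R a) - (x - a) = - (r *\<^sub>R a) - x"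
    by (simp add: algebra_simps)
  show ?thesis by (simp only: indicator_def mem_ball dist_norm eq)
qed

lemma ind_shift3:
  fixes a x :: "real^'n"
  shows "indicator (ball ((1 + r) *\<^sub>R a) e) (x + r *\<^sub>R a) = (indicator (ball a e) x :: real)"
proof -
  have eq: "(1 + r) *\<^sub>R a - (x + r *\<^sub>R a) = a - x"
    by (simp add: algebra_simps)
  show ?thesis by (simp only: indicator_def mem_ball dist_norm eq)
qed

lemma ind_shift4:
  fixes a x :: "real^'n"
  shows "indicator (ball 0 e) (x - a) = (indicator (ball a e) x :: real)"
proof -
  have eq: "0 - (x - a) = a - x" by simp
  show ?thesis by (simp only: indicator_def mem_ball dist_norm eq)
qed

theorem proposition2p3:
  fixes p q r :: ereal and N :: nat and \<alpha> :: "nat \<Rightarrow> real^'n" and \<rho> :: real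
  assumes "0 < p" "0 < q" "0 < r"
    and "inv_exp p + inv_exp q = inv_exp r"
    and "N \<ge> 1"
    and "inj_on \<alpha> {..<N}"
    and "\<rho> > 0"
  shows "S_opnorm p q r N \<alpha> \<rho> \<ge>
           ereal (max (real N powr (inv_exp p - 1/2)) (real N powr (inv_exp q - 1/2)))"
proof -
  note p = assms(1) and q = assms(2) and r = assms(3) and pqr = assms(4) and N = assms(5)
    and inj = assms(6) and \<rho> = assms(7)
  define Ds where "Ds = {dist (\<alpha> i) (\<alpha> j) | i j. i < N \<and> j < N \<and> i \<noteq> j}"
  define D where "D = Min (insert 1 Ds)"
  have finDs: "finite Ds"
  proof -
    have "Ds \<subseteq> (\<lambda>(i,j). dist (\<alpha> i) (\<alpha> j)) ` ({..<N} \<times> {..<N})"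
      unfolding Ds_def by auto
    thus ?thesis by (rule finite_subset) auto
  qed
  have Dpos: "D > 0"
    unfolding D_def using finDs
  proof (subst Min_gr_iff)
    show "\<forall>a\<in>insert 1 Ds. 0 < a"
      using inj unfolding Ds_def inj_on_def by auto
  qed auto
  have Dle: "D \<le> dist (\<alpha> i) (\<alpha> j)" if "i < N" "j < N" "i \<noteq> j" for i j
    unfolding D_def using finDs that by (intro Min_le) (auto simp: Ds_def)
  define e where "e = min 1 \<rho> * D / 2"
  have e: "e > 0" using Dpos \<rho> by (simp add: e_def)
  have sep1: "2 * e \<le> \<rho> * dist (\<alpha> i) (\<alpha> j)"
    and sep2: "2 * e \<le> dist (\<alpha> i) (\<alpha> j)"
    if "i < N" "j < N" "i \<noteq> j" for i j
  proof -
    have d: "D \<le> dist (\<alpha> i) (\<alpha> j)" using Dle that .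
    have "2 * e = min 1 \<rho> * D" by (simp add: e_def)
    also have "\<dots> \<le> min 1 \<rho> * dist (\<alpha> i) (\<alpha> j)"
      using d \<rho> by (intro mult_left_mono) auto
    finally have *: "2 * e \<le> min 1 \<rho> * dist (\<alpha> i) (\<alpha> j)" .
    have "min 1 \<rho> * dist (\<alpha> i) (\<alpha> j) \<le> \<rho> * dist (\<alpha> i) (\<alpha> j)"
      by (intro mult_right_mono) auto
    with * show "2 * e \<le> \<rho> * dist (\<alpha> i) (\<alpha> j)" by linarith
    have "min 1 \<rho> * dist (\<alpha> i) (\<alpha> j) \<le> 1 * dist (\<alpha> i) (\<alpha> j)"
      by (intro mult_right_mono) auto
    with * show "2 * e \<le> dist (\<alpha> i) (\<alpha> j)" by linarith
  qed
  have distsc: "dist (c *\<^sub>R \<alpha> i) (c *\<^sub>R \<alpha> j) = \<bar>c\<bar> * dist (\<alpha> i) (\<alpha> j)" for c i j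
    by (simp add: dist_norm scaleR_diff_right[symmetric])
  have distneg: "dist (- x) (- y) = dist x y" for x y :: "real^'n"
    by (simp add: dist_norm norm_minus_commute)
  define V where "V = measure lebesgue (ball (0::real^'n) e)"
  have V: "V > 0" unfolding V_def using e by simp
  have Npos: "real N > 0" using N by simp
  define ip where "ip = inv_exp p"
  define iq where "iq = inv_exp q"
  have ir: "inv_exp r = ip + iq" using pqr by (simp add: ip_def iq_def)
  have bm: "(\<lambda>x. complex_of_real (a * indicator (ball z e) x)) \<in> borel_measurable lebesgue"
    for a and z :: "real^'n"
  proof -
    have "indicator (ball z e) \<in> borel_measurable lebesgue"
      by (rule borel_measurable_indicator) simp
    hence "(\<lambda>x. a * indicator (ball z e) x) \<in> borel_measurable lebesgue"
      by (intro borel_measurable_times) auto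
    thus ?thesis by (rule measurable_compose) (rule borel_measurable_of_real)
  qed
  let ?Set = "{Lp_ell2_norm r N (S_op \<alpha> \<rho> f g) | f g.
      (\<forall>k<N. f k \<in> borel_measurable lebesgue \<and> g k \<in> borel_measurable lebesgue) \<and>
      Lp_ell2_norm p N f = 1 \<and> Lp_ell2_norm q N g = 1}"
  have opn: "S_opnorm p q r N \<alpha> \<rho> = Sup ?Set" by (simp add: S_opnorm_def)
  have A1: "ereal (real N powr (ip - 1/2)) \<le> S_opnorm p q r N \<alpha> \<rho>"
  proof -
    define a where "a = 1 / (sqrt (real N) * V powr ip)"
    define c where "c = 1 / ((real N * V) powr iq)"
    have a: "a > 0" using Npos V by (simp add: a_def)
    have c: "c > 0" using Npos V by (simp add: c_def)
    define f where "f = (\<lambda>(k::nat) x. complex_of_real (a * indicator (ball (0::real^'n) e) x))"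
    define g where "g = (\<lambda>k x. complex_of_real (c * indicator (ball (- ((1 + \<rho>) *\<^sub>R \<alpha> k)) e) x))"
    have nf: "Lp_ell2_norm p N f = 1"
    proof -
      have "Lp_ell2_norm p N f = ereal (a * sqrt (real N) * V powr ip)"
        unfolding V_def ip_def by (rule ell2_same[OF e a N p, where z=0]) (use a in \<open>simp add: f_def indicator_def\<close>)
      thus ?thesis using Npos V by (simp add: a_def one_ereal_def)
    qed
    have ng: "Lp_ell2_norm q N g = 1"
    proof -
      have "Lp_ell2_norm q N g = ereal (c * (real N * V) powr iq)"
        unfolding V_def iq_def
      proof (rule ell2_disj[OF e c N q])
        fix i j assume "i < N" "j < N" "i \<noteq> j"
        hence "2 * e \<le> dist (\<alpha> i) (\<alpha> j)" by (rule sep2)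
        also have "\<dots> \<le> (1 + \<rho>) * dist (\<alpha> i) (\<alpha> j)" using \<rho> by (simp add: distrib_right)
        finally show "2 * e \<le> dist (- ((1 + \<rho>) *\<^sub>R \<alpha> i)) (- ((1 + \<rho>) *\<^sub>R \<alpha> j))"
          using \<rho> by (simp add: distneg distsc)
      qed (use c in \<open>simp add: g_def indicator_def\<close>)
      thus ?thesis using Npos V by (simp add: c_def one_ereal_def)
    qed
    have nS: "Lp_ell2_norm r N (S_op \<alpha> \<rho> f g) = ereal (a * c * (real N * V) powr inv_exp r)"
      unfolding V_def
    proof (rule ell2_disj[where z = "\<lambda>k. - (\<rho> *\<^sub>R \<alpha> k)"])
      fix i j assume "i < N" "j < N" "i \<noteq> j"
      hence "2 * e \<le> \<rho> * dist (\<alpha> i) (\<alpha> j)" by (rule sep1)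
      thus "2 * e \<le> dist (- (\<rho> *\<^sub>R \<alpha> i)) (- (\<rho> *\<^sub>R \<alpha> j))"
        using \<rho> by (simp add: distneg distsc)
    next
      fix k x
      show "cmod (S_op \<alpha> \<rho> f g k x) = a * c * indicator (ball (- (\<rho> *\<^sub>R \<alpha> k)) e) x"
        unfolding S_op_def f_def g_def ind_shift1 ind_shift2 using a c by (simp add: norm_mult indicator_def)
    qed (use e a c N r in auto)
    have mem: "Lp_ell2_norm r N (S_op \<alpha> \<rho> f g) \<in> ?Set"
    proof -
      have fm: "\<forall>k<N. f k \<in> borel_measurable lebesgue \<and> g k \<in> borel_measurable lebesgue"
        unfolding f_def g_def using bm by blast
      show ?thesis using nf ng fm by blast
    qed
    have "ereal (real N powr (ip - 1/2)) = Lp_ell2_norm r N (S_op \<alpha> \<rho> f g)"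
      using alg[OF Npos V, of ip iq] by (simp add: nS ir a_def c_def)
    also have "\<dots> \<le> S_opnorm p q r N \<alpha> \<rho>" unfolding opn using mem by (rule Sup_upper)
    finally show ?thesis .
  qed
  have A2: "ereal (real N powr (iq - 1/2)) \<le> S_opnorm p q r N \<alpha> \<rho>"
  proof -
    define a where "a = 1 / ((real N * V) powr ip)"
    define c where "c = 1 / (sqrt (real N) * V powr iq)"
    have a: "a > 0" using Npos V by (simp add: a_def)
    have c: "c > 0" using Npos V by (simp add: c_def)
    define f where "f = (\<lambda>k x. complex_of_real (a * indicator (ball ((1 + \<rho>) *\<^sub>R \<alpha> k) e) x))"
    define g where "g = (\<lambda>(k::nat) x. complex_of_real (c * indicator (ball (0::real^'n) e) x))"
    have ng: "Lp_ell2_norm q N g = 1"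
    proof -
      have "Lp_ell2_norm q N g = ereal (c * sqrt (real N) * V powr iq)"
        unfolding V_def iq_def by (rule ell2_same[OF e c N q, where z=0]) (use c in \<open>simp add: g_def indicator_def\<close>)
      thus ?thesis using Npos V by (simp add: c_def one_ereal_def)
    qed
    have nf: "Lp_ell2_norm p N f = 1"
    proof -
      have "Lp_ell2_norm p N f = ereal (a * (real N * V) powr ip)"
        unfolding V_def ip_def
      proof (rule ell2_disj[OF e a N p])
        fix i j assume "i < N" "j < N" "i \<noteq> j"
        hence "2 * e \<le> dist (\<alpha> i) (\<alpha> j)" by (rule sep2)
        also have "\<dots> \<le> (1 + \<rho>) * dist (\<alpha> i) (\<alpha> j)" using \<rho> by (simp add: distrib_right)
        finally show "2 * e \<le> dist ((1 + \<rho>) *\<^sub>R \<alpha> i) ((1 + \<rho>) *\<^sub>R \<alpha> j)"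
          using \<rho> by (simp add: distsc)
      qed (use a in \<open>simp add: f_def indicator_def\<close>)
      thus ?thesis using Npos V by (simp add: a_def one_ereal_def)
    qed
    have nS: "Lp_ell2_norm r N (S_op \<alpha> \<rho> f g) = ereal (a * c * (real N * V) powr inv_exp r)"
      unfolding V_def
    proof (rule ell2_disj[where z = "\<alpha>"])
      fix i j assume "i < N" "j < N" "i \<noteq> j"
      thus "2 * e \<le> dist (\<alpha> i) (\<alpha> j)" by (rule sep2)
    next
      fix k x
      show "cmod (S_op \<alpha> \<rho> f g k x) = a * c * indicator (ball (\<alpha> k) e) x"
        unfolding S_op_def f_def g_def ind_shift3 ind_shift4 using a c by (simp add: norm_mult indicator_def)
    qed (use e a c N r in auto)
    have mem: "Lp_ell2_norm r N (S_op \<alpha> \<rho> f g) \<in> ?Set"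
    proof -
      have fm: "\<forall>k<N. f k \<in> borel_measurable lebesgue \<and> g k \<in> borel_measurable lebesgue"
        unfolding f_def g_def using bm by blast
      show ?thesis using nf ng fm by blast
    qed
    have "ereal (real N powr (iq - 1/2)) = Lp_ell2_norm r N (S_op \<alpha> \<rho> f g)"
      using alg2[OF Npos V, of ip iq] by (simp add: nS ir a_def c_def)
    also have "\<dots> \<le> S_opnorm p q r N \<alpha> \<rho>" unfolding opn using mem by (rule Sup_upper)
    finally show ?thesis .
  qed
  show ?thesis using A1 A2 by (simp add: ip_def iq_def max_def)
qed

end
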